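(* Let $d=2$. Assume $\beta\ne0$, $|\sigma^{(1)}|\ne|\sigma^{(2)}|$, and for $\alpha=1,2$: $\eta^{(\alpha)}\ne0$, $\mathbf v^{(\alpha)}_\pm\not\equiv0$. Then for every $f\in[\widetilde f_{e,l},\widetilde f_{e,u}]$ we have $\widetilde{\mathcal E}^{(1)}_f\cap\widetilde{\mathcal E}^{(2)}_f\subseteq\mathcal F_{f,e}$.
   Context: Let $\Omega\subset\mathbb{R}^2$ be a bounded Lipschitz domain and let $\chi^{(1)}$ be the indicator function of a measurable subset of $\Omega$ ("phase 1"), $\chi^{(2)}=1-\chi^{(1)}$ ("phase 2"). Let $\sigma^{(\alpha)}=\sigma^{(\alpha)}_1+\mathrm{i}\sigma^{(\alpha)}_2$ ($\alpha=1,2$) be complex constants with $\sigma^{(\alpha)}_1>0$ and $\sigma^{(1)}\neq\sigma^{(2)}$, and $\sigma=\sigma^{(1)}\chi^{(1)}+\sigma^{(2)}\chi^{(2)}$. Let $V\in H^1(\Omega;\mathbb C)$ be a weak solution of $\nabla\cdot(\sigma\nabla V)=0$ in $\Omega$. Set $\mathbf E=-\nabla V=\mathbf E_1+\mathrm{i}\mathbf E_2$, $\mathbf J=\sigma\mathbf E=\mathbf J_1+\mathrm{i}\mathbf J_2$ (real parts/imaginary parts). $\langle u\rangle=|\Omega|^{-1}\int_\Omega u$; $f^{(1)}=\langle\chi^{(1)}\rangle\in(0,1)$. For $\alpha,m=1,2$: $\mathbf E^{(\alpha)}_m=\chi^{(\alpha)}\mathbf E_m$, $\mathbf e^{(\alpha)}_m=\langle\mathbf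 E^{(\alpha)}_m\rangle$, $\eta^{(\alpha)}=\langle\|\mathbf E^{(\alpha)}_1\|^2\rangle+\langle\|\mathbf E^{(\alpha)}_2\|^2\rangle$. $\beta=\sigma^{(1)}_1\sigma^{(2)}_2-\sigma^{(1)}_2\sigma^{(2)}_1$. With $\beta\ne0$ define $\gamma=(\sigma^{(1)}_1\sigma^{(2)}_1+\sigma^{(1)}_2\sigma^{(2)}_2)/\beta$, $\psi^{(1)}=|\sigma^{(2)}|^2/\beta$, $\psi^{(2)}=|\sigma^{(1)}|^2/\beta$, $\xi^{(1)}=(\sigma^{(2)}_2\langle\mathbf E_1\cdot\mathbf J_2\rangle+\sigma^{(2)}_1\langle\mathbf E_1\cdot\mathbf J_1\rangle)/\beta$, $\xi^{(2)}=(\sigma^{(1)}_2\langle\mathbf E_1\cdot\mathbf J_2\rangle+\sigma^{(1)}_1\langle\mathbf E_1\cdot\mathbf J_1\rangle)/\beta$. For $f\in(0,1)$ and $(x,y)\in\mathbb R^2$ define $$S^{(1)}_f(x,y)=\begin{bmatrix}x-\frac{\|\mathbf e^{(1)}_1\|^2}{f} & s_1\\ s_1 & -x+\eta^{(1)}-\frac{\|\mathbf e^{(1)}_2\|^2}{f}\end{bmatrix},\quad s_1=-\gamma x-\psi^{(1)}y+\xi^{(1)}-\frac{\mathbf e^{(1)}_1\cdot\mathbf e^{(1)}_2}{f},$$ $$S^{(2)}_f(x,y)=\begin{bmatrix}y-\frac{\|\mathbf e^{(2)}_1\|^2}{1-f} & s_2\\ s_2 & -y+\eta^{(2)}-\frac{\|\mathbf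 e^{(2)}_2\|^2}{1-f}\end{bmatrix},\quad s_2=\psi^{(2)} x+\gamma y-\xi^{(2)}-\frac{\mathbf e^{(2)}_1\cdot\mathbf e^{(2)}_2}{1-f},$$ and $p^{(\alpha)}_f=\det S^{(\alpha)}_f$. Let $R_\perp=\begin{bmatrix}0&1\\-1&0\end{bmatrix}$, $B^{(\alpha)}_{12}=\langle\mathbf E^{(\alpha)}_1\cdot R_\perp\mathbf E^{(\alpha)}_2\rangle$, $f_*=f$ if $\alpha=1$ and $f_*=1-f$ if $\alpha=2$, $\tau^{(\alpha)}_f=\big(B^{(\alpha)}_{12}-\frac{1}{f_*}\mathbf e^{(\alpha)}_1\cdot R_\perp\mathbf e^{(\alpha)}_2\big)^2$. Let $\mathbf v^{(\alpha)}_\pm=\mathbf E^{(\alpha)}_1\pm R_\perp\mathbf E^{(\alpha)}_2$, $\widetilde f_{e,l}=\max_\pm \|\langle\mathbf v^{(1)}_\pm\rangle\|^2/\langle\|\mathbf v^{(1)}_\pm\|^2\rangle$, $\widetilde f_{e,u}=\min_\pm\big(1-\|\langle\mathbf v^{(2)}_\pm\rangle\|^2/\langle\|\mathbf v^{(2)}_\pm\|^2\rangle\big)$. Define $\widetilde{\mathcal E}^{(\alpha)}_f=\{(x,y)\in\mathbb R^2:p^{(\alpha)}_f(x,y)\ge\tau^{(\alpha)}_f\}$ and the rectangle $\mathcal F_{f,e}=\{(x,y): \|\mathbf e^{(1)}_1\|^2/f\le x\le \eta^{(1)}-\|\mathbf e^{(1)}_2\|^2/f,\ \|\mathbf e^{(2)}_1\|^2/(1-f)\le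 y\le \eta^{(2)}-\|\mathbf e^{(2)}_2\|^2/(1-f)\}$. *)

theory Defs
  imports "HOL-Analysis.Analysis"
begin

type_synonym pt = "real^2"

definition lipschitz_domain :: "pt set \<Rightarrow> bool" where
  "lipschitz_domain \<Omega> \<longleftrightarrow> open \<Omega> \<and> connected \<Omega> \<and> \<Omega> \<noteq> {} \<and> bounded \<Omega> \<and>
     (\<forall>p\<in>frontier \<Omega>. \<exists>(Q::real^2^2) (g::real \<Rightarrow> real) L r h.
        orthogonal_matrix Q \<and> r > 0 \<and> h > 0 \<and> L-lipschitz_on UNIV g \<and> g 0 = 0 \<and>
        (\<forall>s t. \<bar>s\<bar> < r \<and> \<bar>t\<bar> < h \<longrightarrow>
            (p + Q *v vector [s, t] \<in> \<Omega> \<longleftrightarrow> g s < t)))"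

primrec Ck :: "nat \<Rightarrow> (pt \<Rightarrow> real) \<Rightarrow> bool" where
  "Ck 0 f = continuous_on UNIV f"
| "Ck (Suc k) f = (continuous_on UNIV f \<and>
     (\<forall>i. \<exists>g. (\<forall>x. ((\<lambda>t. f (x + t *\<^sub>R axis i 1)) has_real_derivative g x) (at 0)) \<and> Ck k g))"

definition dpart :: "2 \<Rightarrow> (pt \<Rightarrow> real) \<Rightarrow> pt \<Rightarrow> real" where
  "dpart i \<phi> x = deriv (\<lambda>t. \<phi> (x + t *\<^sub>R axis i 1)) 0"

definition test_fn :: "pt set \<Rightarrow> (pt \<Rightarrow> real) \<Rightarrow> bool" where
  "test_fn \<Omega> \<phi> \<longleftrightarrow> (\<forall>k. Ck k \<phi>) \<and> compact (closure {x. \<phi> x \<noteq> 0})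
      \<and> closure {x. \<phi> x \<noteq> 0} \<subseteq> \<Omega>"

definition L2_on :: "pt set \<Rightarrow> (pt \<Rightarrow> complex) \<Rightarrow> bool" where
  "L2_on \<Omega> u \<longleftrightarrow> set_borel_measurable lebesgue \<Omega> u \<and>
      set_integrable lebesgue \<Omega> (\<lambda>x. (cmod (u x))\<^sup>2)"

definition H1_with_grad :: "pt set \<Rightarrow> (pt \<Rightarrow> complex) \<Rightarrow> (pt \<Rightarrow> complex^2) \<Rightarrow> bool" where
  "H1_with_grad \<Omega> V G \<longleftrightarrow> L2_on \<Omega> V \<and> (\<forall>i. L2_on \<Omega> (\<lambda>x. G x $ i)) \<and>
     (\<forall>\<phi> i. test_fn \<Omega> \<phi> \<longrightarrow>
        (LINT x:\<Omega>|lebesgue. V x * complex_of_real (dpart i \<phi> x))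
          = - (LINT x:\<Omega>|lebesgue. G x $ i * complex_of_real (\<phi> x)))"

definition sig :: "pt set \<Rightarrow> complex \<Rightarrow> complex \<Rightarrow> pt \<Rightarrow> complex" where
  "sig A s1 s2 x = (if x \<in> A then s1 else s2)"

definition weak_solution :: "pt set \<Rightarrow> pt set \<Rightarrow> complex \<Rightarrow> complex \<Rightarrow> (pt \<Rightarrow> complex) \<Rightarrow> (pt \<Rightarrow> complex^2) \<Rightarrow> bool" where
  "weak_solution \<Omega> A s1 s2 V G \<longleftrightarrow> H1_with_grad \<Omega> V G \<and>
     (\<forall>\<phi>. test_fn \<Omega> \<phi> \<longrightarrow>
        (LINT x:\<Omega>|lebesgue. sig A s1 s2 x * (\<Sum>i\<in>UNIV. G x $ i * complex_of_real (dpart i \<phi> x))) = 0)"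

definition avg :: "pt set \<Rightarrow> (pt \<Rightarrow> 'b::{banach,second_countable_topology}) \<Rightarrow> 'b" where
  "avg \<Omega> u = (1 / measure lebesgue \<Omega>) *\<^sub>R (LINT x:\<Omega>|lebesgue. u x)"

definition E1 :: "(pt \<Rightarrow> complex^2) \<Rightarrow> pt \<Rightarrow> real^2" where
  "E1 G x = (\<chi> i. Re (- G x $ i))"
definition E2 :: "(pt \<Rightarrow> complex^2) \<Rightarrow> pt \<Rightarrow> real^2" where
  "E2 G x = (\<chi> i. Im (- G x $ i))"
definition J1 :: "pt set \<Rightarrow> complex \<Rightarrow> complex \<Rightarrow> (pt \<Rightarrow> complex^2) \<Rightarrow> pt \<Rightarrow> real^2" where
  "J1 A s1 s2 G x = (\<chi> i. Re (sig A s1 s2 x * - G x $ i))"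
definition J2 :: "pt set \<Rightarrow> complex \<Rightarrow> complex \<Rightarrow> (pt \<Rightarrow> complex^2) \<Rightarrow> pt \<Rightarrow> real^2" where
  "J2 A s1 s2 G x = (\<chi> i. Im (sig A s1 s2 x * - G x $ i))"

definition chi :: "pt set \<Rightarrow> nat \<Rightarrow> pt \<Rightarrow> real" where
  "chi A \<alpha> x = (if \<alpha> = 1 then indicator A x else 1 - indicator A x)"

definition Em :: "(pt \<Rightarrow> complex^2) \<Rightarrow> nat \<Rightarrow> pt \<Rightarrow> real^2" where
  "Em G m = (if m = 1 then E1 G else E2 G)"

definition Eam :: "pt set \<Rightarrow> (pt \<Rightarrow> complex^2) \<Rightarrow> nat \<Rightarrow> nat \<Rightarrow> pt \<Rightarrow> real^2" where
  "Eam A G \<alpha> m x = chi A \<alpha> x *\<^sub>R Em G m x"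

definition ea :: "pt set \<Rightarrow> pt set \<Rightarrow> (pt \<Rightarrow> complex^2) \<Rightarrow> nat \<Rightarrow> nat \<Rightarrow> real^2" where
  "ea \<Omega> A G \<alpha> m = avg \<Omega> (Eam A G \<alpha> m)"

definition eta :: "pt set \<Rightarrow> pt set \<Rightarrow> (pt \<Rightarrow> complex^2) \<Rightarrow> nat \<Rightarrow> real" where
  "eta \<Omega> A G \<alpha> = avg \<Omega> (\<lambda>x. (norm (Eam A G \<alpha> 1 x))\<^sup>2) + avg \<Omega> (\<lambda>x. (norm (Eam A G \<alpha> 2 x))\<^sup>2)"

definition beta :: "complex \<Rightarrow> complex \<Rightarrow> real" where
  "beta s1 s2 = Re s1 * Im s2 - Im s1 * Re s2"

definition gam :: "complex \<Rightarrow> complex \<Rightarrow> real" where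
  "gam s1 s2 = (Re s1 * Re s2 + Im s1 * Im s2) / beta s1 s2"

definition psi1 :: "complex \<Rightarrow> complex \<Rightarrow> real" where
  "psi1 s1 s2 = (cmod s2)\<^sup>2 / beta s1 s2"
definition psi2 :: "complex \<Rightarrow> complex \<Rightarrow> real" where
  "psi2 s1 s2 = (cmod s1)\<^sup>2 / beta s1 s2"

definition xi1 :: "pt set \<Rightarrow> pt set \<Rightarrow> complex \<Rightarrow> complex \<Rightarrow> (pt \<Rightarrow> complex^2) \<Rightarrow> real" where
  "xi1 \<Omega> A s1 s2 G = (Im s2 * avg \<Omega> (\<lambda>x. E1 G x \<bullet> J2 A s1 s2 G x)
                     + Re s2 * avg \<Omega> (\<lambda>x. E1 G x \<bullet> J1 A s1 s2 G x)) / beta s1 s2"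
definition xi2 :: "pt set \<Rightarrow> pt set \<Rightarrow> complex \<Rightarrow> complex \<Rightarrow> (pt \<Rightarrow> complex^2) \<Rightarrow> real" where
  "xi2 \<Omega> A s1 s2 G = (Im s1 * avg \<Omega> (\<lambda>x. E1 G x \<bullet> J2 A s1 s2 G x)
                     + Re s1 * avg \<Omega> (\<lambda>x. E1 G x \<bullet> J1 A s1 s2 G x)) / beta s1 s2"

definition S1 :: "pt set \<Rightarrow> pt set \<Rightarrow> complex \<Rightarrow> complex \<Rightarrow> (pt \<Rightarrow> complex^2) \<Rightarrow> real \<Rightarrow> real \<Rightarrow> real \<Rightarrow> real^2^2" where
  "S1 \<Omega> A s1 s2 G f x y =
     (let e1 = ea \<Omega> A G 1 1; e2 = ea \<Omega> A G 1 2;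
          s = - gam s1 s2 * x - psi1 s1 s2 * y + xi1 \<Omega> A s1 s2 G - (e1 \<bullet> e2) / f
      in vector [vector [x - (norm e1)\<^sup>2 / f, s],
                 vector [s, - x + eta \<Omega> A G 1 - (norm e2)\<^sup>2 / f]])"

definition S2 :: "pt set \<Rightarrow> pt set \<Rightarrow> complex \<Rightarrow> complex \<Rightarrow> (pt \<Rightarrow> complex^2) \<Rightarrow> real \<Rightarrow> real \<Rightarrow> real \<Rightarrow> real^2^2" where
  "S2 \<Omega> A s1 s2 G f x y =
     (let e1 = ea \<Omega> A G 2 1; e2 = ea \<Omega> A G 2 2;
          s = psi2 s1 s2 * x + gam s1 s2 * y - xi2 \<Omega> A s1 s2 G - (e1 \<bullet> e2) / (1 - f)
      in vector [vector [y - (norm e1)\<^sup>2 / (1 - f), s],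
                 vector [s, - y + eta \<Omega> A G 2 - (norm e2)\<^sup>2 / (1 - f)]])"

definition pf :: "pt set \<Rightarrow> pt set \<Rightarrow> complex \<Rightarrow> complex \<Rightarrow> (pt \<Rightarrow> complex^2) \<Rightarrow> nat \<Rightarrow> real \<Rightarrow> real \<Rightarrow> real \<Rightarrow> real" where
  "pf \<Omega> A s1 s2 G \<alpha> f x y =
     det (if \<alpha> = 1 then S1 \<Omega> A s1 s2 G f x y else S2 \<Omega> A s1 s2 G f x y)"

definition Rperp :: "real^2^2" where
  "Rperp = vector [vector [0, 1], vector [- 1, 0]]"

definition B12 :: "pt set \<Rightarrow> pt set \<Rightarrow> (pt \<Rightarrow> complex^2) \<Rightarrow> nat \<Rightarrow> real" where
  "B12 \<Omega> A G \<alpha> = avg \<Omega> (\<lambda>x. Eam A G \<alpha> 1 x \<bullet> (Rperp *v Eam A G \<alpha> 2 x))"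

definition fstar :: "nat \<Rightarrow> real \<Rightarrow> real" where
  "fstar \<alpha> f = (if \<alpha> = 1 then f else 1 - f)"

definition tau :: "pt set \<Rightarrow> pt set \<Rightarrow> (pt \<Rightarrow> complex^2) \<Rightarrow> nat \<Rightarrow> real \<Rightarrow> real" where
  "tau \<Omega> A G \<alpha> f =
     (B12 \<Omega> A G \<alpha> - (1 / fstar \<alpha> f) * (ea \<Omega> A G \<alpha> 1 \<bullet> (Rperp *v ea \<Omega> A G \<alpha> 2)))\<^sup>2"

definition vpm :: "pt set \<Rightarrow> (pt \<Rightarrow> complex^2) \<Rightarrow> nat \<Rightarrow> bool \<Rightarrow> pt \<Rightarrow> real^2" where
  "vpm A G \<alpha> pl x =
     (if pl then Eam A G \<alpha> 1 x + Rperp *v Eam A G \<alpha> 2 x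
      else Eam A G \<alpha> 1 x - Rperp *v Eam A G \<alpha> 2 x)"

definition ratio :: "pt set \<Rightarrow> pt set \<Rightarrow> (pt \<Rightarrow> complex^2) \<Rightarrow> nat \<Rightarrow> bool \<Rightarrow> real" where
  "ratio \<Omega> A G \<alpha> pl =
     (norm (avg \<Omega> (vpm A G \<alpha> pl)))\<^sup>2 / avg \<Omega> (\<lambda>x. (norm (vpm A G \<alpha> pl x))\<^sup>2)"

definition fel :: "pt set \<Rightarrow> pt set \<Rightarrow> (pt \<Rightarrow> complex^2) \<Rightarrow> real" where
  "fel \<Omega> A G = max (ratio \<Omega> A G 1 True) (ratio \<Omega> A G 1 False)"

definition feu :: "pt set \<Rightarrow> pt set \<Rightarrow> (pt \<Rightarrow> complex^2) \<Rightarrow> real" where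
  "feu \<Omega> A G = min (1 - ratio \<Omega> A G 2 True) (1 - ratio \<Omega> A G 2 False)"

definition Etil :: "pt set \<Rightarrow> pt set \<Rightarrow> complex \<Rightarrow> complex \<Rightarrow> (pt \<Rightarrow> complex^2) \<Rightarrow> nat \<Rightarrow> real \<Rightarrow> (real \<times> real) set" where
  "Etil \<Omega> A s1 s2 G \<alpha> f = {(x, y). pf \<Omega> A s1 s2 G \<alpha> f x y \<ge> tau \<Omega> A G \<alpha> f}"

definition Ffe :: "pt set \<Rightarrow> pt set \<Rightarrow> (pt \<Rightarrow> complex^2) \<Rightarrow> real \<Rightarrow> (real \<times> real) set" where
  "Ffe \<Omega> A G f = {(x, y).
      (norm (ea \<Omega> A G 1 1))\<^sup>2 / f \<le> x \<and> x \<le> eta \<Omega> A G 1 - (norm (ea \<Omega> A G 1 2))\<^sup>2 / f \<and>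
      (norm (ea \<Omega> A G 2 1))\<^sup>2 / (1 - f) \<le> y \<and> y \<le> eta \<Omega> A G 2 - (norm (ea \<Omega> A G 2 2))\<^sup>2 / (1 - f)}"

end

theory Submission
  imports Defs
begin

lemma Rperp_1[simp]: "(Rperp *v q) $ 1 = q $ 2"
  by (simp add: Rperp_def matrix_vector_mult_def sum_2)
lemma Rperp_2[simp]: "(Rperp *v q) $ 2 = - q $ 1"
  by (simp add: Rperp_def matrix_vector_mult_def sum_2)
lemma inner_2: "(p::real^2) \<bullet> q = p$1*q$1 + p$2*q$2"
  by (simp add: inner_vec_def sum_2)
lemma norm_sq_2: "(norm (q::real^2))^2 = (q$1)^2 + (q$2)^2"
  by (metis dot_square_norm inner_2 power2_eq_square)
lemma norm_Rperp[simp]: "norm (Rperp *v q) = norm q"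
  by (metis norm_sq_2 Rperp_1 Rperp_2 power2_minus add.commute norm_ge_zero power2_eq_iff_nonneg)
lemma pm_identity: "(norm (p + Rperp *v q))^2 + (norm (p - Rperp *v q))^2 = 2*(norm p)^2 + 2*(norm q)^2"
  unfolding norm_sq_2 by (simp add: power2_eq_square algebra_simps)

lemma Rperp_scale: "Rperp *v (c *\<^sub>R b) = c *\<^sub>R (Rperp *v b)"
  by (simp add: vec_eq_iff forall_2)

lemma key:
  fixes M :: "'a measure" and P Q :: "'a \<Rightarrow> real^2" and c f :: real
  assumes v_def: "v = (\<lambda>pl x. if pl then P x + Rperp *v Q x else P x - Rperp *v Q x)"
  assumes iP: "integrable M P" and iQ: "integrable M Q"
    and iP2: "integrable M (\<lambda>x. (norm (P x))^2)" and iQ2: "integrable M (\<lambda>x. (norm (Q x))^2)"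
    and cpos: "0 < c" and vnz: "\<And>pl. \<not> (AE x in M. v pl x = 0)"
    and rat: "\<And>pl. (norm (c *\<^sub>R integral\<^sup>L M (v pl)))^2 / (c * integral\<^sup>L M (\<lambda>x. (norm (v pl x))^2)) \<le> f"
  shows "(norm (c *\<^sub>R integral\<^sup>L M P))^2 + (norm (c *\<^sub>R integral\<^sup>L M Q))^2
     \<le> f * (c * integral\<^sup>L M (\<lambda>x. (norm (P x))^2) + c * integral\<^sup>L M (\<lambda>x. (norm (Q x))^2))"
proof -
  have iRQ: "integrable M (\<lambda>x. Rperp *v Q x)"
    by (rule integrable_bounded_linear[OF matrix_vector_mul_bounded_linear iQ])
  have intR: "integral\<^sup>L M (\<lambda>x. Rperp *v Q x) = Rperp *v integral\<^sup>L M Q"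
    by (rule integral_bounded_linear[OF matrix_vector_mul_bounded_linear iQ])
  have iv: "integrable M (v pl)" for pl
    unfolding v_def using iP iRQ by (cases pl) auto
  have intv: "integral\<^sup>L M (v pl) = (if pl then integral\<^sup>L M P + Rperp *v integral\<^sup>L M Q
        else integral\<^sup>L M P - Rperp *v integral\<^sup>L M Q)" for pl
    unfolding v_def using iP iRQ intR by (cases pl) auto
  have iv2: "integrable M (\<lambda>x. (norm (v pl x))^2)" for pl
  proof (rule Bochner_Integration.integrable_bound[OF Bochner_Integration.integrable_add[OF integrable_mult_right[OF iP2, of 2] integrable_mult_right[OF iQ2, of 2]]])
    show "(\<lambda>x. (norm (v pl x))\<^sup>2) \<in> borel_measurable M"
      using borel_measurable_integrable[OF iv[of pl]] by measurable
    show "AE x in M. norm ((norm (v pl x))\<^sup>2) \<le> norm (2 * (norm (P x))\<^sup>2 + 2 * (norm (Q x))\<^sup>2)"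
    proof (rule AE_I2)
      fix x
      have "(norm (v pl x))\<^sup>2 \<le> (norm (v True x))\<^sup>2 + (norm (v False x))\<^sup>2"
        by (cases pl) auto
      also have "\<dots> = 2 * (norm (P x))\<^sup>2 + 2 * (norm (Q x))\<^sup>2"
        unfolding v_def by (simp add: pm_identity)
      finally show "norm ((norm (v pl x))\<^sup>2) \<le> norm (2 * (norm (P x))\<^sup>2 + 2 * (norm (Q x))\<^sup>2)"
        by simp
    qed
  qed
  have Dsum: "integral\<^sup>L M (\<lambda>x. (norm (v True x))^2) + integral\<^sup>L M (\<lambda>x. (norm (v False x))^2)
      = 2 * integral\<^sup>L M (\<lambda>x. (norm (P x))^2) + 2 * integral\<^sup>L M (\<lambda>x. (norm (Q x))^2)"
  proof -
    have "integral\<^sup>L M (\<lambda>x. (norm (v True x))^2) + integral\<^sup>L M (\<lambda>x. (norm (v False x))^2)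
        = integral\<^sup>L M (\<lambda>x. (norm (v True x))^2 + (norm (v False x))^2)"
      using iv2 by simp
    also have "\<dots> = integral\<^sup>L M (\<lambda>x. 2 * (norm (P x))^2 + 2 * (norm (Q x))^2)"
      unfolding v_def by (simp add: pm_identity)
    also have "\<dots> = 2 * integral\<^sup>L M (\<lambda>x. (norm (P x))^2) + 2 * integral\<^sup>L M (\<lambda>x. (norm (Q x))^2)"
      using iP2 iQ2 by simp
    finally show ?thesis .
  qed
  have Dpos: "0 < c * integral\<^sup>L M (\<lambda>x. (norm (v pl x))^2)" for pl
  proof -
    have ge: "0 \<le> integral\<^sup>L M (\<lambda>x. (norm (v pl x))^2)" by simp
    have "integral\<^sup>L M (\<lambda>x. (norm (v pl x))^2) \<noteq> 0"
    proof
      assume "integral\<^sup>L M (\<lambda>x. (norm (v pl x))^2) = 0"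
      then have "AE x in M. (norm (v pl x))^2 = 0"
        using integral_nonneg_eq_0_iff_AE[OF iv2[of pl]] by simp
      then have "AE x in M. v pl x = 0" by simp
      then show False using vnz[of pl] by blast
    qed
    then have "0 < integral\<^sup>L M (\<lambda>x. (norm (v pl x))^2)" using ge by linarith
    then show ?thesis using cpos by simp
  qed
  have Nle: "(norm (c *\<^sub>R integral\<^sup>L M (v pl)))^2 \<le> f * (c * integral\<^sup>L M (\<lambda>x. (norm (v pl x))^2))" for pl
    using rat[of pl] Dpos[of pl] by (simp add: divide_le_eq)
  have Nsum: "(norm (c *\<^sub>R integral\<^sup>L M (v True)))^2 + (norm (c *\<^sub>R integral\<^sup>L M (v False)))^2
     = 2 * (norm (c *\<^sub>R integral\<^sup>L M P))^2 + 2 * (norm (c *\<^sub>R integral\<^sup>L M Q))^2"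
    using pm_identity[of "c *\<^sub>R integral\<^sup>L M P" "c *\<^sub>R integral\<^sup>L M Q"]
    by (simp add: intv scaleR_add_right scaleR_diff_right Rperp_scale)
  have "f * (c * integral\<^sup>L M (\<lambda>x. (norm (v True x))^2)) + f * (c * integral\<^sup>L M (\<lambda>x. (norm (v False x))^2))
     = f * c * (integral\<^sup>L M (\<lambda>x. (norm (v True x))^2) + integral\<^sup>L M (\<lambda>x. (norm (v False x))^2))"
    by (simp add: algebra_simps)
  also have "\<dots> = 2 * (f * (c * integral\<^sup>L M (\<lambda>x. (norm (P x))^2) + c * integral\<^sup>L M (\<lambda>x. (norm (Q x))^2)))"
    unfolding Dsum by (simp add: algebra_simps)
  finally have "f * (c * integral\<^sup>L M (\<lambda>x. (norm (v True x))^2)) + f * (c * integral\<^sup>L M (\<lambda>x. (norm (v False x))^2))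
     = 2 * (f * (c * integral\<^sup>L M (\<lambda>x. (norm (P x))^2) + c * integral\<^sup>L M (\<lambda>x. (norm (Q x))^2)))" .
  then show ?thesis
    using Nle[of True] Nle[of False] Nsum by linarith
qed

lemma le_1_sq: "(t::real) \<le> 1 + t^2"
proof -
  have "0 \<le> (t - 1)^2" by simp
  hence "0 \<le> t^2 - 2*t + 1" by (simp add: power2_diff)
  moreover have "0 \<le> t^2" by simp
  ultimately show ?thesis by linarith
qed

lemma comp_bound: "\<bar>Eam A G \<alpha> m x $ j\<bar> \<le> cmod (G x $ j)"
proof -
  have c: "\<bar>chi A \<alpha> x\<bar> \<le> 1" by (simp add: chi_def indicator_def)
  have e: "\<bar>Em G m x $ j\<bar> \<le> cmod (G x $ j)"
    using abs_Re_le_cmod[of "- G x $ j"] abs_Im_le_cmod[of "- G x $ j"]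
    by (simp add: Em_def E1_def E2_def)
  have "\<bar>Eam A G \<alpha> m x $ j\<bar> = \<bar>chi A \<alpha> x\<bar> * \<bar>Em G m x $ j\<bar>"
    by (simp add: Eam_def abs_mult)
  also have "\<dots> \<le> 1 * cmod (G x $ j)"
    using c e by (intro mult_mono) auto
  finally show ?thesis by simp
qed

lemma integrability:
  assumes Om: "\<Omega> \<in> lmeasurable" and Ameas: "A \<in> sets lebesgue" and H: "H1_with_grad \<Omega> V G"
  shows "integrable (lebesgue_on \<Omega>) (Eam A G \<alpha> m) \<and> integrable (lebesgue_on \<Omega>) (\<lambda>x. (norm (Eam A G \<alpha> m x))^2)"
proof -
  have Oms: "\<Omega> \<in> sets lebesgue" using Om by (simp add: fmeasurable_def)
  have Oms': "\<Omega> \<inter> space lebesgue \<in> sets lebesgue" using Oms by simp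
  have G: "(\<lambda>x. G x $ i) \<in> borel_measurable (lebesgue_on \<Omega>)
      \<and> integrable (lebesgue_on \<Omega>) (\<lambda>x. (cmod (G x $ i))^2)" for i
    using H unfolding H1_with_grad_def L2_on_def set_borel_measurable_def set_integrable_def
    by (simp add: borel_measurable_restrict_space_iff[OF Oms'] integrable_restrict_space[OF Oms'])
  have one: "integrable (lebesgue_on \<Omega>) (\<lambda>x. 1::real)"
  proof -
    have "integrable lebesgue (indicator \<Omega> :: _ \<Rightarrow> real)"
      using Om unfolding integrable_indicator_iff fmeasurable_def
      by (simp only: Int_UNIV_right space_completion space_lborel space_borel mem_Collect_eq)
    then show ?thesis by (simp add: integrable_restrict_space[OF Oms'])
  qed
  have chim: "chi A \<alpha> \<in> borel_measurable (lebesgue_on \<Omega>)"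
    using Ameas by (intro measurable_restrict_space1) (simp add: chi_def[abs_def] borel_measurable_indicator)
  have compm: "(\<lambda>x. Eam A G \<alpha> m x $ j) \<in> borel_measurable (lebesgue_on \<Omega>)" for j
  proof -
    have "(\<lambda>x. Em G m x $ j) \<in> borel_measurable (lebesgue_on \<Omega>)"
    proof -
      have gm: "(\<lambda>x. G x $ j) \<in> borel_measurable (lebesgue_on \<Omega>)" using G[of j] by blast
      have "(\<lambda>x. Re (G x $ j)) \<in> borel_measurable (lebesgue_on \<Omega>)" using measurable_compose[OF gm borel_measurable_Re] by simp
      moreover have "(\<lambda>x. Im (G x $ j)) \<in> borel_measurable (lebesgue_on \<Omega>)" using measurable_compose[OF gm borel_measurable_Im] by simp
      ultimately show ?thesis by (simp add: Em_def E1_def E2_def)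
    qed
    then show ?thesis using chim by (simp add: Eam_def)
  qed
  have compi: "integrable (lebesgue_on \<Omega>) (\<lambda>x. Eam A G \<alpha> m x $ j)" for j
  proof (rule Bochner_Integration.integrable_bound[OF Bochner_Integration.integrable_add[OF one conjunct2[OF G[of j]]] compm])
    show "AE x in lebesgue_on \<Omega>. norm (Eam A G \<alpha> m x $ j) \<le> norm (1 + (cmod (G x $ j))\<^sup>2)"
    proof (rule AE_I2)
      fix x
      have "\<bar>Eam A G \<alpha> m x $ j\<bar> \<le> cmod (G x $ j)" by (rule comp_bound)
      moreover have "cmod (G x $ j) \<le> 1 + (cmod (G x $ j))\<^sup>2"
        by (rule le_1_sq)
      ultimately show "norm (Eam A G \<alpha> m x $ j) \<le> norm (1 + (cmod (G x $ j))\<^sup>2)" by simp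
    qed
  qed
  have i1: "integrable (lebesgue_on \<Omega>) (Eam A G \<alpha> m)"
    using compi integrable_iff_component[OF Oms] by blast
  have i2: "integrable (lebesgue_on \<Omega>) (\<lambda>x. (norm (Eam A G \<alpha> m x))^2)"
  proof (rule Bochner_Integration.integrable_bound[OF Bochner_Integration.integrable_add[OF conjunct2[OF G[of 1]] conjunct2[OF G[of 2]]]])
    show "(\<lambda>x. (norm (Eam A G \<alpha> m x))^2) \<in> borel_measurable (lebesgue_on \<Omega>)"
      using borel_measurable_integrable[OF i1] by measurable
    show "AE x in lebesgue_on \<Omega>. norm ((norm (Eam A G \<alpha> m x))^2) \<le> norm ((cmod (G x $ 1))\<^sup>2 + (cmod (G x $ 2))\<^sup>2)"
    proof (rule AE_I2)
      fix x
      have "(Eam A G \<alpha> m x $ 1)^2 \<le> (cmod (G x $ 1))\<^sup>2"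
        using comp_bound[of A G \<alpha> m x 1] by (metis abs_ge_zero power2_abs power_mono)
      moreover have "(Eam A G \<alpha> m x $ 2)^2 \<le> (cmod (G x $ 2))\<^sup>2"
        using comp_bound[of A G \<alpha> m x 2] by (metis abs_ge_zero power2_abs power_mono)
      ultimately show "norm ((norm (Eam A G \<alpha> m x))^2) \<le> norm ((cmod (G x $ 1))\<^sup>2 + (cmod (G x $ 2))\<^sup>2)"
        by (simp add: norm_sq_2)
    qed
  qed
  show ?thesis using i1 i2 by blast
qed

lemma div_bound: assumes g: "0 < (g::real)" and h: "a + b \<le> g * e" shows "a / g \<le> e - b / g"
proof -
  have "(a + b) / g \<le> e" using g h by (simp add: pos_divide_le_eq mult.commute)
  then show ?thesis by (simp add: add_divide_distrib)
qed

lemma interval_from_prod: "(a::real) \<le> c \<Longrightarrow> 0 \<le> (x - a) * (c - x) \<Longrightarrow> a \<le> x \<and> x \<le> c"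
proof (rule ccontr)
  assume ac: "a \<le> c" and p: "0 \<le> (x - a) * (c - x)" and n: "\<not> (a \<le> x \<and> x \<le> c)"
  show False
  proof (cases "x < a")
    case True
    then have "(x - a) * (c - x) < 0" using ac by (intro mult_neg_pos) auto
    then show False using p by linarith
  next
    case False
    then have "c < x" using n by auto
    then have "(x - a) * (c - x) < 0" using ac by (intro mult_pos_neg) auto
    then show False using p by linarith
  qed
qed

theorem mainTheorem9:
  fixes \<Omega> A :: "(real^2) set" and s1 s2 :: complex
    and V :: "real^2 \<Rightarrow> complex" and G :: "real^2 \<Rightarrow> complex^2"
  assumes dom: "lipschitz_domain \<Omega>"
    and A_meas: "A \<in> sets lebesgue" and A_sub: "A \<subseteq> \<Omega>"
    and f1: "0 < avg \<Omega> (indicator A :: real^2 \<Rightarrow> real)" "avg \<Omega> (indicator A :: real^2 \<Rightarrow> real) < 1"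
    and pos: "Re s1 > 0" "Re s2 > 0" and neq: "s1 \<noteq> s2"
    and sol: "weak_solution \<Omega> A s1 s2 V G"
    and beta_nz: "beta s1 s2 \<noteq> 0"
    and abs_ne: "cmod s1 \<noteq> cmod s2"
    and eta_nz: "\<forall>\<alpha>\<in>{1,2}. eta \<Omega> A G \<alpha> \<noteq> 0"
    and v_nz: "\<forall>\<alpha>\<in>{1,2}. \<forall>pl. \<not> (AE x in lebesgue. x \<in> \<Omega> \<longrightarrow> vpm A G \<alpha> pl x = 0)"
  shows "\<forall>f. fel \<Omega> A G \<le> f \<and> f \<le> feu \<Omega> A G \<and> 0 < f \<and> f < 1 \<longrightarrow>
           Etil \<Omega> A s1 s2 G 1 f \<inter> Etil \<Omega> A s1 s2 G 2 f \<subseteq> Ffe \<Omega> A G f"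
proof -
  have Olm: "\<Omega> \<in> lmeasurable" using dom lmeasurable_open unfolding lipschitz_domain_def by blast
  have Oms: "\<Omega> \<in> sets lebesgue" using Olm by (simp add: fmeasurable_def)
  have Oms': "\<Omega> \<inter> space lebesgue \<in> sets lebesgue" using Oms by simp
  define M where "M = lebesgue_on \<Omega>"
  define c where "c = 1 / measure lebesgue \<Omega>"
  have avg_eq: "avg \<Omega> u = c *\<^sub>R integral\<^sup>L M u" for u :: "real^2 \<Rightarrow> 'b::{banach,second_countable_topology}"
    unfolding avg_def c_def M_def set_lebesgue_integral_def integral_restrict_space[OF Oms'] by simp
  have H: "H1_with_grad \<Omega> V G" using sol unfolding weak_solution_def by blast
  have integ: "integrable M (Eam A G \<alpha> m) \<and> integrable M (\<lambda>x. (norm (Eam A G \<alpha> m x))^2)" for \<alpha> m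
    unfolding M_def by (rule integrability[OF Olm A_meas H])
  have cpos: "0 < c"
  proof -
    have "measure lebesgue \<Omega> \<noteq> 0"
    proof
      assume "measure lebesgue \<Omega> = 0"
      then have "eta \<Omega> A G 1 = 0" by (simp add: eta_def avg_def)
      then show False using eta_nz by simp
    qed
    moreover have "0 \<le> measure lebesgue \<Omega>" by (rule measure_nonneg)
    ultimately have "0 < measure lebesgue \<Omega>" by linarith
    then show ?thesis unfolding c_def by simp
  qed
  have bound: "(norm (ea \<Omega> A G \<alpha> 1))^2 + (norm (ea \<Omega> A G \<alpha> 2))^2 \<le> g * eta \<Omega> A G \<alpha>"
    if a: "\<alpha> \<in> {1,2}" and r: "\<And>pl. ratio \<Omega> A G \<alpha> pl \<le> g" for \<alpha> g
  proof -
    have vnz: "\<not> (AE x in M. vpm A G \<alpha> pl x = 0)" for pl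
      using v_nz a unfolding M_def AE_restrict_space_iff[OF Oms'] by blast
    have "(norm (c *\<^sub>R integral\<^sup>L M (Eam A G \<alpha> 1)))^2 + (norm (c *\<^sub>R integral\<^sup>L M (Eam A G \<alpha> 2)))^2
     \<le> g * (c * integral\<^sup>L M (\<lambda>x. (norm (Eam A G \<alpha> 1 x))^2) + c * integral\<^sup>L M (\<lambda>x. (norm (Eam A G \<alpha> 2 x))^2))"
    proof (rule key[where v="vpm A G \<alpha>"])
      show "vpm A G \<alpha> = (\<lambda>pl x. if pl then Eam A G \<alpha> 1 x + Rperp *v Eam A G \<alpha> 2 x else Eam A G \<alpha> 1 x - Rperp *v Eam A G \<alpha> 2 x)"
        by (simp add: vpm_def fun_eq_iff)
      show "(norm (c *\<^sub>R integral\<^sup>L M (vpm A G \<alpha> pl)))\<^sup>2 / (c * integral\<^sup>L M (\<lambda>x. (norm (vpm A G \<alpha> pl x))\<^sup>2)) \<le> g" for pl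
        using r[of pl] unfolding ratio_def avg_eq by simp
    qed (use integ cpos vnz in auto)
    then show ?thesis unfolding ea_def eta_def avg_eq by simp
  qed
  show ?thesis
  proof (intro allI impI subsetI)
    fix f z
    assume hf: "fel \<Omega> A G \<le> f \<and> f \<le> feu \<Omega> A G \<and> 0 < f \<and> f < 1"
    assume hz: "z \<in> Etil \<Omega> A s1 s2 G 1 f \<inter> Etil \<Omega> A s1 s2 G 2 f"
    obtain x y where z: "z = (x, y)" by fastforce
    have b1: "(norm (ea \<Omega> A G 1 1))^2 + (norm (ea \<Omega> A G 1 2))^2 \<le> f * eta \<Omega> A G 1"
    proof (rule bound)
      fix pl show "ratio \<Omega> A G 1 pl \<le> f" using hf by (cases pl) (auto simp: fel_def)
    qed simp
    have b2: "(norm (ea \<Omega> A G 2 1))^2 + (norm (ea \<Omega> A G 2 2))^2 \<le> (1 - f) * eta \<Omega> A G 2"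
    proof (rule bound)
      fix pl show "ratio \<Omega> A G 2 pl \<le> 1 - f" using hf by (cases pl) (auto simp: feu_def)
    qed simp
    have f0: "0 < f" "0 < 1 - f" using hf by auto
    have c1: "(norm (ea \<Omega> A G 1 1))^2 / f \<le> eta \<Omega> A G 1 - (norm (ea \<Omega> A G 1 2))^2 / f"
      using div_bound[OF f0(1) b1] .
    have c2: "(norm (ea \<Omega> A G 2 1))^2 / (1 - f) \<le> eta \<Omega> A G 2 - (norm (ea \<Omega> A G 2 2))^2 / (1 - f)"
      using div_bound[OF f0(2) b2] .
    have p1: "tau \<Omega> A G 1 f \<le> pf \<Omega> A s1 s2 G 1 f x y" using hz z by (simp add: Etil_def)
    have p2: "tau \<Omega> A G 2 f \<le> pf \<Omega> A s1 s2 G 2 f x y" using hz z by (simp add: Etil_def)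
    have t1: "0 \<le> tau \<Omega> A G 1 f" "0 \<le> tau \<Omega> A G 2 f" by (simp_all add: tau_def)
    have "pf \<Omega> A s1 s2 G 1 f x y = (x - (norm (ea \<Omega> A G 1 1))^2 / f) *
        (eta \<Omega> A G 1 - (norm (ea \<Omega> A G 1 2))^2 / f - x) - (S1 \<Omega> A s1 s2 G f x y $ 1 $ 2) * (S1 \<Omega> A s1 s2 G f x y $ 1 $ 2)"
      by (simp add: pf_def S1_def Let_def det_2 algebra_simps)
    then have q1: "0 \<le> (x - (norm (ea \<Omega> A G 1 1))^2 / f) *
        (eta \<Omega> A G 1 - (norm (ea \<Omega> A G 1 2))^2 / f - x)"
      using p1 t1 by (smt (verit) zero_le_square)
    have "pf \<Omega> A s1 s2 G 2 f x y = (y - (norm (ea \<Omega> A G 2 1))^2 / (1 - f)) *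
        (eta \<Omega> A G 2 - (norm (ea \<Omega> A G 2 2))^2 / (1 - f) - y) - (S2 \<Omega> A s1 s2 G f x y $ 1 $ 2) * (S2 \<Omega> A s1 s2 G f x y $ 1 $ 2)"
      by (simp add: pf_def S2_def Let_def det_2 algebra_simps)
    then have q2: "0 \<le> (y - (norm (ea \<Omega> A G 2 1))^2 / (1 - f)) *
        (eta \<Omega> A G 2 - (norm (ea \<Omega> A G 2 2))^2 / (1 - f) - y)"
      using p2 t1 by (smt (verit) zero_le_square)
    show "z \<in> Ffe \<Omega> A G f"
      using interval_from_prod[OF c1 q1] interval_from_prod[OF c2 q2] z by (simp add: Ffe_def)
  qed
qed
end
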